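(* Let $\mu,\nu\in\mathbb{H}$ be pure unit quaternions, let $N\ge 1$, and let $\alpha_1,\ldots,\alpha_N,\beta_1,\ldots,\beta_N$ be real angles. Let $q$ be a quaternion-valued Gaussian random variable such that, for every $i\in\{1,\ldots,N\}$, $q\stackrel{d}{=} e^{\mu\alpha_i}\,q\,e^{\nu\beta_i}$. Then $q\stackrel{d}{=} e^{\mu\zeta}\,q\,e^{\nu\chi}$, where $\zeta=\sum_{i=1}^N\alpha_i$ and $\chi=\sum_{i=1}^N\beta_i$.
   Context: $\mathbb{H}$ denotes Hamilton's quaternions with basis $1,\mathbf{i},\mathbf{j},\mathbf{k}$, $\mathbf{i}^2=\mathbf{j}^2=\mathbf{k}^2=\mathbf{i}\mathbf{j}\mathbf{k}=-1$. A quaternion is pure if its real (scalar) part is zero; for a pure unit quaternion $\mu$ (so $\mu^2=-1$) and real $\theta$, $e^{\mu\theta}=\cos\theta+\mu\sin\theta$. A quaternion Gaussian random variable is a random quaternion $q=a+b\mathbf{i}+c\mathbf{j}+d\mathbf{k}$ whose real vector $(a,b,c,d)$ is Gaussian. The notation $X\stackrel{d}{=}Y$ means equality in distribution. In the paper's terminology, $q\stackrel{d}{=}e^{\mu\alpha}qe^{\nu\beta}$ is called ${}^{\alpha}(\mu,\nu)^{\beta}$-properness. *)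

theory Defs
  imports "HOL-Probability.Probability"
begin

text \<open>Quaternions a + b i + c j + d k represented as real 4-tuples (a,b,c,d);
  the product topology / Borel sets / Euclidean norm on the tuple type are the
  standard ones on R^4.\<close>

type_synonym quat = "real \<times> real \<times> real \<times> real"

definition qmult :: "quat \<Rightarrow> quat \<Rightarrow> quat" (infixl "\<otimes>\<^sub>q" 70) where
  "qmult p q = (case p of (a1,b1,c1,d1) \<Rightarrow> case q of (a2,b2,c2,d2) \<Rightarrow>
     (a1*a2 - b1*b2 - c1*c2 - d1*d2,
      a1*b2 + b1*a2 + c1*d2 - d1*c2,
      a1*c2 - b1*d2 + c1*a2 + d1*b2,
      a1*d2 + b1*c2 - c1*b2 + d1*a2))"

definition pure_quat :: "quat \<Rightarrow> bool" where
  "pure_quat q \<longleftrightarrow> fst q = 0"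

definition pure_unit_quat :: "quat \<Rightarrow> bool" where
  "pure_unit_quat q \<longleftrightarrow> pure_quat q \<and> norm q = 1"

definition qexp :: "quat \<Rightarrow> real \<Rightarrow> quat" where
  "qexp \<mu> \<theta> = (cos \<theta>, 0, 0, 0) + sin \<theta> *\<^sub>R \<mu>"

text \<open>A random quaternion is Gaussian iff its real 4-vector is (jointly) Gaussian,
  i.e. every real linear functional of it is normally distributed (possibly degenerate).\<close>
definition quat_gaussian :: "'s measure \<Rightarrow> ('s \<Rightarrow> quat) \<Rightarrow> bool" where
  "quat_gaussian M X \<longleftrightarrow> X \<in> borel_measurable M \<and>
     (\<forall>v::quat. \<exists>m \<sigma>::real.
        (\<sigma> = 0 \<and> distr M borel (\<lambda>\<omega>. v \<bullet> X \<omega>) = return borel m) \<or>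
        (\<sigma> > 0 \<and> distributed M lborel (\<lambda>\<omega>. v \<bullet> X \<omega>) (normal_density m \<sigma>)))"

definition eq_distr :: "'s measure \<Rightarrow> ('s \<Rightarrow> quat) \<Rightarrow> ('s \<Rightarrow> quat) \<Rightarrow> bool" where
  "eq_distr M X Y \<longleftrightarrow> distr M borel X = distr M borel Y"

end

theory Submission
  imports Defs
begin

lemma qmult_expl: "qmult p r =
  (fst p * fst r - fst (snd p) * fst (snd r) - fst (snd (snd p)) * fst (snd (snd r)) - snd (snd (snd p)) * snd (snd (snd r)),
   fst p * fst (snd r) + fst (snd p) * fst r + fst (snd (snd p)) * snd (snd (snd r)) - snd (snd (snd p)) * fst (snd (snd r)),
   fst p * fst (snd (snd r)) - fst (snd p) * snd (snd (snd r)) + fst (snd (snd p)) * fst r + snd (snd (snd p)) * fst (snd r),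
   fst p * snd (snd (snd r)) + fst (snd p) * fst (snd (snd r)) - fst (snd (snd p)) * fst (snd r) + snd (snd (snd p)) * fst r)"
  by (cases p; cases r) (auto simp: qmult_def)

lemma qmult_assoc: "qmult (qmult a b) c = qmult a (qmult b c)"
proof -
  obtain a1 a2 a3 a4 where a: "a = (a1,a2,a3,a4)" by (cases a) auto
  obtain b1 b2 b3 b4 where b: "b = (b1,b2,b3,b4)" by (cases b) auto
  obtain c1 c2 c3 c4 where c: "c = (c1,c2,c3,c4)" by (cases c) auto
  show ?thesis unfolding a b c by (simp only: qmult_def prod.case prod.inject; algebra)
qed

lemma qmult_one_left: "qmult (1,0,0,0) x = x"
proof -
  obtain a1 a2 a3 a4 where a: "x = (a1,a2,a3,a4)" by (cases x) auto
  show ?thesis unfolding a by (simp add: qmult_def)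
qed
lemma qmult_one_right: "qmult x (1,0,0,0) = x"
proof -
  obtain a1 a2 a3 a4 where a: "x = (a1,a2,a3,a4)" by (cases x) auto
  show ?thesis unfolding a by (simp add: qmult_def)
qed

lemma qexp_zero: "qexp m 0 = (1,0,0,0)"
  by (simp add: qexp_def zero_prod_def)

lemma pu_sq: assumes "pure_unit_quat m"
  shows "fst (snd m)^2 + fst (snd (snd m))^2 + snd (snd (snd m))^2 = 1"
proof -
  obtain a b c d where m: "m = (a,b,c,d)" by (cases m) auto
  from assms have "a = 0" "norm (a,b,c,d) = 1" by (auto simp: pure_unit_quat_def pure_quat_def m)
  then have "sqrt (b^2 + (c^2 + d^2)) = 1" by (simp add: norm_Pair)
  then have "b^2 + (c^2+d^2) = 1"
    by (metis add_nonneg_nonneg real_sqrt_eq_1_iff zero_le_power2)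
  then show ?thesis by (simp add: m)
qed

lemma qexp_add: assumes "pure_unit_quat m"
  shows "qmult (qexp m a) (qexp m b) = qexp m (a + b)"
proof -
  obtain z x y w where m: "m = (z,x,y,w)" by (cases m) auto
  have z: "z = 0" using assms by (auto simp: pure_unit_quat_def pure_quat_def m)
  have s: "x^2 + y^2 + w^2 = 1" using pu_sq[OF assms] by (simp add: m)
  have e1: "cos (a+b) = cos a * cos b - sin a * sin b * (x^2+y^2+w^2)"
    using s by (simp add: cos_add)
  have e2: "sin (a+b) = cos a * sin b + sin a * cos b" by (simp add: sin_add algebra_simps)
  show ?thesis unfolding qexp_def m z e1 e2
    by (simp add: qmult_def; simp add: algebra_simps power2_eq_square)
qed

definition TT :: "quat \<Rightarrow> quat \<Rightarrow> real \<Rightarrow> real \<Rightarrow> quat \<Rightarrow> quat" where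
  "TT m n a b x = qmult (qmult (qexp m a) x) (qexp n b)"

lemma TT_meas: "TT m n a b \<in> borel_measurable borel"
proof -
  have "continuous_on UNIV (TT m n a b)"
    unfolding TT_def qmult_expl by (intro continuous_intros)
  then show ?thesis by (rule borel_measurable_continuous_onI)
qed

lemma TT_comp: assumes "pure_unit_quat m" "pure_unit_quat n"
  shows "TT m n A B (TT m n a b x) = TT m n (A + a) (B + b) x"
  unfolding TT_def
  by (simp add: qmult_assoc qexp_add[OF assms(2)] qexp_add[OF assms(1), symmetric] add.commute)

theorem mainTheorem1:
  fixes M :: "'s measure" and q :: "'s \<Rightarrow> quat" and \<mu> \<nu> :: quat
    and N :: nat and \<alpha> \<beta> :: "nat \<Rightarrow> real"
  assumes "prob_space M"
    and "pure_unit_quat \<mu>" and "pure_unit_quat \<nu>"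
    and "N \<ge> 1"
    and "quat_gaussian M q"
    and "\<forall>i\<in>{1..N}. eq_distr M q (\<lambda>\<omega>. qexp \<mu> (\<alpha> i) \<otimes>\<^sub>q q \<omega> \<otimes>\<^sub>q qexp \<nu> (\<beta> i))"
  shows "eq_distr M q (\<lambda>\<omega>. qexp \<mu> (\<Sum>i=1..N. \<alpha> i) \<otimes>\<^sub>q q \<omega> \<otimes>\<^sub>q qexp \<nu> (\<Sum>i=1..N. \<beta> i))"
proof -
  have qm: "q \<in> borel_measurable M" using assms(5) by (simp add: quat_gaussian_def)
  have H: "\<And>i. i \<in> {1..N} \<Longrightarrow> distr M borel q = distr M borel (\<lambda>\<omega>. TT \<mu> \<nu> (\<alpha> i) (\<beta> i) (q \<omega>))"
    using assms(6) by (simp add: eq_distr_def TT_def)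
  have "n \<le> N \<Longrightarrow> distr M borel q = distr M borel (\<lambda>\<omega>. TT \<mu> \<nu> (\<Sum>i=1..n. \<alpha> i) (\<Sum>i=1..n. \<beta> i) (q \<omega>))" for n
  proof (induction n)
    case 0
    then show ?case by (simp add: TT_def qexp_zero qmult_one_left qmult_one_right)
  next
    case (Suc n)
    let ?A = "\<Sum>i=1..n. \<alpha> i" and ?B = "\<Sum>i=1..n. \<beta> i"
    have IH: "distr M borel q = distr M borel (\<lambda>\<omega>. TT \<mu> \<nu> ?A ?B (q \<omega>))" using Suc by simp
    have h: "distr M borel q = distr M borel (\<lambda>\<omega>. TT \<mu> \<nu> (\<alpha> (Suc n)) (\<beta> (Suc n)) (q \<omega>))"
      using H Suc.prems by simp
    have "distr M borel q = distr (distr M borel q) borel (TT \<mu> \<nu> ?A ?B)"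
      using IH distr_distr[OF TT_meas qm] by (simp add: comp_def)
    also have "\<dots> = distr (distr M borel (\<lambda>\<omega>. TT \<mu> \<nu> (\<alpha> (Suc n)) (\<beta> (Suc n)) (q \<omega>))) borel (TT \<mu> \<nu> ?A ?B)"
      using h by simp
    also have "\<dots> = distr M borel (TT \<mu> \<nu> ?A ?B \<circ> (\<lambda>\<omega>. TT \<mu> \<nu> (\<alpha> (Suc n)) (\<beta> (Suc n)) (q \<omega>)))"
      by (rule distr_distr[OF TT_meas]) (rule measurable_compose[OF qm TT_meas])
    also have "\<dots> = distr M borel (\<lambda>\<omega>. TT \<mu> \<nu> (\<Sum>i=1..Suc n. \<alpha> i) (\<Sum>i=1..Suc n. \<beta> i) (q \<omega>))"
      by (simp add: comp_def TT_comp[OF assms(2,3)])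
    finally show ?case .
  qed
  then show ?thesis by (simp add: eq_distr_def TT_def)
qed

end
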